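(* Let $G$ be a torsion-free group, $\mathbb{F}$ a field, $\alpha$ a zero divisor in $\mathbb{F}[G]$ with $|supp(\alpha)|=4$ and $|S_\alpha|=12$, and $\beta$ a non-zero element of $\mathbb{F}[G]$ with $\alpha\beta=0$. Let $B=supp(\alpha)$, $C=supp(\beta)$. If $s\in\Delta^i$ and $s'\in\Delta^j$ with $s\ne s'$ and $i,j\in\{2,3,4\}$, then $|\mathcal{V}(s)\cap\mathcal{V}(s')|\le1$.
   Context: $supp(\gamma)=\{x\in G:\gamma_x\ne0\}$; $S_\alpha=\{h^{-1}h':h\ne h',\ h,h'\in supp(\alpha)\}$. $BC=\{bc:b\in B,c\in C\}$. For $s\in BC$, $R(s)=\{(b,c)\in B\times C: bc=s\}$ and $r(s)=|R(s)|$; $\Delta^i=\{s\in BC: r(s)=i\}$; $\mathcal{V}(s)=\{g\in C:(sg^{-1},g)\in R(s)\}$. *)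

theory Defs
  imports "HOL-Algebra.Group"
begin

definition torsion_free :: "('g, 'b) monoid_scheme \<Rightarrow> bool" where
  "torsion_free G \<longleftrightarrow>
     (\<forall>g \<in> carrier G. g \<noteq> \<one>\<^bsub>G\<^esub> \<longrightarrow> (\<forall>n::nat. n > 0 \<longrightarrow> g [^]\<^bsub>G\<^esub> n \<noteq> \<one>\<^bsub>G\<^esub>))"

definition supp :: "('g \<Rightarrow> 'f::zero) \<Rightarrow> 'g set" where
  "supp a = {x. a x \<noteq> 0}"

definition group_ring :: "('g, 'b) monoid_scheme \<Rightarrow> ('g \<Rightarrow> 'f::zero) set" where
  "group_ring G = {a. finite (supp a) \<and> supp a \<subseteq> carrier G}"

definition gr_mult :: "('g, 'b) monoid_scheme \<Rightarrow> ('g \<Rightarrow> 'f::field) \<Rightarrow> ('g \<Rightarrow> 'f) \<Rightarrow> 'g \<Rightarrow> 'f" where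
  "gr_mult G a b = (\<lambda>x. if x \<in> carrier G
      then (\<Sum>h\<in>supp a. a h * b (inv\<^bsub>G\<^esub> h \<otimes>\<^bsub>G\<^esub> x)) else 0)"

definition S_set :: "('g, 'b) monoid_scheme \<Rightarrow> ('g \<Rightarrow> 'f::zero) \<Rightarrow> 'g set" where
  "S_set G a = {inv\<^bsub>G\<^esub> h \<otimes>\<^bsub>G\<^esub> h' | h h'. h \<noteq> h' \<and> h \<in> supp a \<and> h' \<in> supp a}"

definition prodset :: "('g, 'b) monoid_scheme \<Rightarrow> 'g set \<Rightarrow> 'g set \<Rightarrow> 'g set" where
  "prodset G B C = {b \<otimes>\<^bsub>G\<^esub> c | b c. b \<in> B \<and> c \<in> C}"

definition Rset :: "('g, 'b) monoid_scheme \<Rightarrow> 'g set \<Rightarrow> 'g set \<Rightarrow> 'g \<Rightarrow> ('g \<times> 'g) set" where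
  "Rset G B C s = {(b, c). b \<in> B \<and> c \<in> C \<and> b \<otimes>\<^bsub>G\<^esub> c = s}"

definition rnum :: "('g, 'b) monoid_scheme \<Rightarrow> 'g set \<Rightarrow> 'g set \<Rightarrow> 'g \<Rightarrow> nat" where
  "rnum G B C s = card (Rset G B C s)"

definition Delta :: "('g, 'b) monoid_scheme \<Rightarrow> 'g set \<Rightarrow> 'g set \<Rightarrow> nat \<Rightarrow> 'g set" where
  "Delta G B C i = {s \<in> prodset G B C. rnum G B C s = i}"

definition Vset :: "('g, 'b) monoid_scheme \<Rightarrow> 'g set \<Rightarrow> 'g set \<Rightarrow> 'g \<Rightarrow> 'g set" where
  "Vset G B C s = {g \<in> C. (s \<otimes>\<^bsub>G\<^esub> inv\<^bsub>G\<^esub> g, g) \<in> Rset G B C s}"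

end

theory Submission
  imports Defs
begin

lemma offdiag_card:
  assumes "finite A"
  shows "card {(h, h'). h \<noteq> h' \<and> h \<in> A \<and> h' \<in> A} = card A * card A - card A"
proof -
  have eq: "{(h, h'). h \<noteq> h' \<and> h \<in> A \<and> h' \<in> A} = A \<times> A - (\<lambda>h. (h, h)) ` A" by auto
  have "card ((\<lambda>h. (h, h)) ` A) = card A" by (rule card_image) (auto intro: inj_onI)
  moreover have "(\<lambda>h. (h, h)) ` A \<subseteq> A \<times> A" by auto
  ultimately show ?thesis unfolding eq using assms
    by (simp add: card_Diff_subset card_cartesian_product)
qed

theorem mainTheorem17:
  fixes G :: "('g, 'b) monoid_scheme"
    and \<alpha> \<beta> :: "'g \<Rightarrow> 'f::field"
    and s s' :: 'g and i j :: nat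
  assumes "group G" and "torsion_free G"
    and "\<alpha> \<in> group_ring G" and "\<beta> \<in> group_ring G"
    and "card (supp \<alpha>) = 4" and "card (S_set G \<alpha>) = 12"
    and "\<beta> \<noteq> (\<lambda>_. 0)" and "gr_mult G \<alpha> \<beta> = (\<lambda>_. 0)"
    and "s \<in> Delta G (supp \<alpha>) (supp \<beta>) i" and "s' \<in> Delta G (supp \<alpha>) (supp \<beta>) j"
    and "s \<noteq> s'" and "i \<in> {2, 3, 4}" and "j \<in> {2, 3, 4}"
  shows "card (Vset G (supp \<alpha>) (supp \<beta>) s \<inter> Vset G (supp \<alpha>) (supp \<beta>) s') \<le> 1"
proof -
  interpret group G by fact
  define A where "A = supp \<alpha>"
  define C where "C = supp \<beta>"
  have fA: "finite A" and AG: "A \<subseteq> carrier G" using assms(3) unfolding A_def group_ring_def by auto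
  have fC: "finite C" and CG: "C \<subseteq> carrier G" using assms(4) unfolding C_def group_ring_def by auto
  define P where "P = {(h, h'). h \<noteq> h' \<and> h \<in> A \<and> h' \<in> A}"
  define f where "f = (\<lambda>(h, h'). inv\<^bsub>G\<^esub> h \<otimes>\<^bsub>G\<^esub> h')"
  have SP: "S_set G \<alpha> = f ` P" unfolding S_set_def P_def f_def A_def by auto
  have fP: "finite P" unfolding P_def
    by (rule finite_subset[of _ "A \<times> A"]) (use fA in auto)
  have "card P = 12" unfolding P_def using offdiag_card[OF fA] assms(5) A_def by simp
  hence "card (f ` P) = card P" using SP assms(6) by simp
  hence inj: "inj_on f P" using inj_on_iff_eq_card fP by blast
  have sG: "s \<in> carrier G" using assms(9) AG CG unfolding Delta_def prodset_def A_def C_def by auto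
  have s'G: "s' \<in> carrier G" using assms(10) AG CG unfolding Delta_def prodset_def A_def C_def by auto
  have key: "x = y" if x: "x \<in> Vset G A C s \<inter> Vset G A C s'" and y: "y \<in> Vset G A C s \<inter> Vset G A C s'" for x y
  proof (rule ccontr)
    assume ne: "x \<noteq> y"
    have xC: "x \<in> C" and yC: "y \<in> C" using x y unfolding Vset_def by auto
    hence xG: "x \<in> carrier G" and yG: "y \<in> carrier G" using CG by auto
    have b1: "s \<otimes>\<^bsub>G\<^esub> inv\<^bsub>G\<^esub> x \<in> A" and b1': "s' \<otimes>\<^bsub>G\<^esub> inv\<^bsub>G\<^esub> x \<in> A" and b2: "s \<otimes>\<^bsub>G\<^esub> inv\<^bsub>G\<^esub> y \<in> A" and b2': "s' \<otimes>\<^bsub>G\<^esub> inv\<^bsub>G\<^esub> y \<in> A"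
      using x y unfolding Vset_def Rset_def by auto
    have calc: "inv\<^bsub>G\<^esub> (t \<otimes>\<^bsub>G\<^esub> inv\<^bsub>G\<^esub> x) \<otimes>\<^bsub>G\<^esub> (t \<otimes>\<^bsub>G\<^esub> inv\<^bsub>G\<^esub> y) = x \<otimes>\<^bsub>G\<^esub> inv\<^bsub>G\<^esub> y" if tG: "t \<in> carrier G" for t
    proof -
      have "inv\<^bsub>G\<^esub> (t \<otimes>\<^bsub>G\<^esub> inv\<^bsub>G\<^esub> x) \<otimes>\<^bsub>G\<^esub> (t \<otimes>\<^bsub>G\<^esub> inv\<^bsub>G\<^esub> y) = (x \<otimes>\<^bsub>G\<^esub> inv\<^bsub>G\<^esub> t) \<otimes>\<^bsub>G\<^esub> (t \<otimes>\<^bsub>G\<^esub> inv\<^bsub>G\<^esub> y)"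
        using tG xG by (simp add: inv_mult_group)
      also have "\<dots> = x \<otimes>\<^bsub>G\<^esub> (inv\<^bsub>G\<^esub> t \<otimes>\<^bsub>G\<^esub> t) \<otimes>\<^bsub>G\<^esub> inv\<^bsub>G\<^esub> y" using tG xG yG by (metis inv_closed l_inv m_assoc m_closed r_one l_one)
      also have "\<dots> = x \<otimes>\<^bsub>G\<^esub> inv\<^bsub>G\<^esub> y" using tG xG yG by simp
      finally show ?thesis .
    qed
    have ni: "inv\<^bsub>G\<^esub> x \<noteq> inv\<^bsub>G\<^esub> y"
    proof
      assume "inv\<^bsub>G\<^esub> x = inv\<^bsub>G\<^esub> y"
      hence "inv\<^bsub>G\<^esub> (inv\<^bsub>G\<^esub> x) = inv\<^bsub>G\<^esub> (inv\<^bsub>G\<^esub> y)" by simp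
      thus False using ne xG yG by simp
    qed
    have n1: "s \<otimes>\<^bsub>G\<^esub> inv\<^bsub>G\<^esub> x \<noteq> s \<otimes>\<^bsub>G\<^esub> inv\<^bsub>G\<^esub> y" using ni sG xG yG by simp
    have n2: "s' \<otimes>\<^bsub>G\<^esub> inv\<^bsub>G\<^esub> x \<noteq> s' \<otimes>\<^bsub>G\<^esub> inv\<^bsub>G\<^esub> y" using ni s'G xG yG by simp
    have n3: "s \<otimes>\<^bsub>G\<^esub> inv\<^bsub>G\<^esub> x \<noteq> s' \<otimes>\<^bsub>G\<^esub> inv\<^bsub>G\<^esub> x" using assms(11) sG s'G xG by simp
    have p1: "(s \<otimes>\<^bsub>G\<^esub> inv\<^bsub>G\<^esub> x, s \<otimes>\<^bsub>G\<^esub> inv\<^bsub>G\<^esub> y) \<in> P" using b1 b2 n1 unfolding P_def by auto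
    have p2: "(s' \<otimes>\<^bsub>G\<^esub> inv\<^bsub>G\<^esub> x, s' \<otimes>\<^bsub>G\<^esub> inv\<^bsub>G\<^esub> y) \<in> P" using b1' b2' n2 unfolding P_def by auto
    have "f (s \<otimes>\<^bsub>G\<^esub> inv\<^bsub>G\<^esub> x, s \<otimes>\<^bsub>G\<^esub> inv\<^bsub>G\<^esub> y) = f (s' \<otimes>\<^bsub>G\<^esub> inv\<^bsub>G\<^esub> x, s' \<otimes>\<^bsub>G\<^esub> inv\<^bsub>G\<^esub> y)"
      unfolding f_def using calc[OF sG] calc[OF s'G] by simp
    with inj p1 p2 have "(s \<otimes>\<^bsub>G\<^esub> inv\<^bsub>G\<^esub> x, s \<otimes>\<^bsub>G\<^esub> inv\<^bsub>G\<^esub> y) = (s' \<otimes>\<^bsub>G\<^esub> inv\<^bsub>G\<^esub> x, s' \<otimes>\<^bsub>G\<^esub> inv\<^bsub>G\<^esub> y)" by (meson inj_onD)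
    with n3 show False by simp
  qed
  have fin: "finite (Vset G A C s \<inter> Vset G A C s')" using fC unfolding Vset_def by auto
  have "card (Vset G A C s \<inter> Vset G A C s') \<le> Suc 0"
    using card_le_Suc0_iff_eq[OF fin] key by blast
  thus ?thesis unfolding A_def C_def by simp
qed

end
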